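(* Let $f:\mathbb{R}^n \to \mathbb{R}$ be strongly convex and piecewise linear-quadratic, with a fixed representation by polyhedral sets $F_1,\dots,F_p$ as described in the context, and let $C \subset \mathbb{R}^n$ be a nonempty closed convex set such that for every $x \in \mathbb{R}^n$ with $F_x \cap C \neq \emptyset$ the collection $\{F_x,C\}$ is boundedly linearly regular. Then for every $R>0$ there exists $L>0$ such that for all $x \in B_R$ and all $x^* \in \partial f(x)$, \[ \operatorname{dist}_f^{x^*}(x,C)^2 \le L \cdot \operatorname{dist}(x, C)^2 . \]
   Context: $f$ is strongly convex if there is $\alpha>0$ with $f(y)\ge f(x)+\langle x^*,y-x\rangle+\frac{\alpha}{2}\|y-x\|_2^2$ for all $x,y\in\mathbb{R}^n$, $x^*\in\partial f(x)$. A convex $f:\mathbb{R}^n\to\mathbb{R}$ is piecewise linear-quadratic if there are finitely many polyhedral sets $F_i\subset\mathbb{R}^n$, $i\in I=\{1,\dots,p\}$, whose union is $\mathbb{R}^n$, such that on each $F_i$, $f(x)=\frac12\langle x,A_ix\rangle+\langle a_i,x\rangle+\alpha_i$ with symmetric positive semidefinite $A_i$, $a_i\in\mathbb{R}^n$, $\alpha_i\in\mathbb{R}$. For $x\in\mathbb{R}^n$ set $I_f(x)=\{i: x\in F_i\}$ and $F_x=\bigcap_{i\in I_f(x)}F_i$. $B_R=\{x:\|x\|_2\le R\}$. A collection of closed convex sets $C_1,\dots,C_r$ with nonempty intersection $D=\bigcap_i C_i$ is boundedly linearly regular if for every $R>0$ there is $\gamma>0$ with $\operatorname{dist}(x,D)^2\le\gamma\sum_{i=1}^r\operatorname{dist}(x,C_i)^2$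 for all $x\in B_R$ ($\operatorname{dist}$ = Euclidean distance). For $x^*\in\partial f(x)$, $D_f^{x^*}(x,y)=f(y)-f(x)-\langle x^*,y-x\rangle$ and $\operatorname{dist}_f^{x^*}(x,C)^2:=\min_{y\in C}D_f^{x^*}(x,y)$. *)

theory Defs
  imports "HOL-Analysis.Analysis"
begin

definition subdiff :: "('a::real_inner \<Rightarrow> real) \<Rightarrow> 'a \<Rightarrow> 'a set" where
  "subdiff f x = {s. \<forall>y. f y \<ge> f x + inner s (y - x)}"

definition strongly_convex :: "('a::real_inner \<Rightarrow> real) \<Rightarrow> bool" where
  "strongly_convex f \<longleftrightarrow> (\<exists>\<alpha>>0. \<forall>x y. \<forall>s\<in>subdiff f x.
      f y \<ge> f x + inner s (y - x) + \<alpha> / 2 * (norm (y - x))\<^sup>2)"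

definition plq_repr ::
  "(real^'n \<Rightarrow> real) \<Rightarrow> nat \<Rightarrow> (nat \<Rightarrow> (real^'n) set) \<Rightarrow> (nat \<Rightarrow> real^'n^'n)
     \<Rightarrow> (nat \<Rightarrow> real^'n) \<Rightarrow> (nat \<Rightarrow> real) \<Rightarrow> bool" where
  "plq_repr f p F A a \<alpha> \<longleftrightarrow>
     (\<forall>i\<in>{1..p}. polyhedron (F i)) \<and>
     (\<Union>i\<in>{1..p}. F i) = UNIV \<and>
     (\<forall>i\<in>{1..p}. transpose (A i) = A i \<and> (\<forall>x. inner x (A i *v x) \<ge> 0)) \<and>
     (\<forall>i\<in>{1..p}. \<forall>x\<in>F i. f x = 1/2 * inner x (A i *v x) + inner (a i) x + \<alpha> i)"

definition active_idx :: "nat \<Rightarrow> (nat \<Rightarrow> 'a set) \<Rightarrow> 'a \<Rightarrow> nat set" where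
  "active_idx p F x = {i\<in>{1..p}. x \<in> F i}"

definition F_at :: "nat \<Rightarrow> (nat \<Rightarrow> 'a set) \<Rightarrow> 'a \<Rightarrow> 'a set" where
  "F_at p F x = (\<Inter>i\<in>active_idx p F x. F i)"

definition boundedly_linearly_regular :: "('a::euclidean_space) set list \<Rightarrow> bool" where
  "boundedly_linearly_regular Cs \<longleftrightarrow>
     (\<forall>C\<in>set Cs. closed C \<and> convex C) \<and> (\<Inter>(set Cs)) \<noteq> {} \<and>
     (\<forall>R>0. \<exists>\<gamma>>0. \<forall>x\<in>cball 0 R.
        (infdist x (\<Inter>(set Cs)))\<^sup>2 \<le> \<gamma> * (\<Sum>C\<leftarrow>Cs. (infdist x C)\<^sup>2))"

definition bregman :: "('a::real_inner \<Rightarrow> real) \<Rightarrow> 'a \<Rightarrow> 'a \<Rightarrow> 'a \<Rightarrow> real" where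
  "bregman f s x y = f y - f x - inner s (y - x)"

definition bregman_dist2 :: "('a::real_inner \<Rightarrow> real) \<Rightarrow> 'a \<Rightarrow> 'a \<Rightarrow> 'a set \<Rightarrow> real" where
  "bregman_dist2 f s x C = (INF y\<in>C. bregman f s x y)"

end

theory Submission imports Defs begin

lemma quad_zero:
  fixes b c t0 :: real
  assumes "t0 > 0" "c \<ge> 0" "\<And>t. -t0 \<le> t \<Longrightarrow> t \<le> 1 \<Longrightarrow> t*b + t^2*c \<ge> 0"
  shows "b = 0"
proof (rule ccontr)
  assume nz: "b \<noteq> 0"
  show False
  proof (cases "b > 0")
    case True
    define e where "e = min t0 (b/(c+1))"
    have e: "e > 0" "e \<le> t0" "e \<le> b/(c+1)" using True assms by (auto simp: e_def)
    have "(-e)*b + (-e)^2*c \<ge> 0" using assms(3)[of "-e"] e by auto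
    hence "e*c \<ge> b" using e by (simp add: power2_eq_square algebra_simps)
    moreover have "e*c \<le> b/(c+1)*c" using mult_right_mono[OF e(3) assms(2)] by simp
    moreover have "b/(c+1)*c < b" using True assms by (simp add: field_simps)
    ultimately show False by linarith
  next
    case False
    hence bn: "b < 0" using nz by auto
    define e where "e = min 1 (-b/(c+1))"
    have e: "e > 0" "e \<le> 1" "e \<le> -b/(c+1)" using bn assms by (auto simp: e_def divide_neg_pos)
    have "e*b + e^2*c \<ge> 0" using assms(3)[of "e"] e assms(1) by auto
    hence "e*(b + e*c) \<ge> 0" by (simp add: power2_eq_square algebra_simps)
    hence "b + e*c \<ge> 0" using e by (simp add: zero_le_mult_iff)
    hence "e*c \<ge> -b" by (simp add: algebra_simps)
    moreover have "e*c \<le> -b/(c+1)*c" using mult_right_mono[OF e(3) assms(2)] by simp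
    moreover have "-b/(c+1)*c < -b" using bn assms by (simp add: field_simps)
    ultimately show False by linarith
  qed
qed

lemma sym_inner:
  fixes A :: "real^'n^'n"
  assumes "transpose A = A"
  shows "inner d (A *v x) = inner x (A *v d)"
proof -
  have "inner d (A *v x) = inner (d v* A) x" by (simp add: dot_lmul_matrix)
  also have "d v* A = A *v d" using vector_transpose_matrix[of d A] assms by simp
  finally show ?thesis by (simp add: inner_commute)
qed

lemma quad_expand:
  fixes A :: "real^'n^'n"
  assumes "transpose A = A"
  shows "1/2 * inner (x + t *\<^sub>R d) (A *v (x + t *\<^sub>R d)) + inner a (x + t *\<^sub>R d) + al
       = (1/2 * inner x (A *v x) + inner a x + al) + t * (inner x (A *v d) + inner a d)
         + t^2 * (1/2 * inner d (A *v d))"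
  using sym_inner[OF assms, of d x]
  by (simp add: algebra_simps inner_add_left inner_add_right power2_eq_square matrix_vector_mult_scaleR)

lemma key:
  fixes f :: "real^'n \<Rightarrow> real"
  assumes plq: "plq_repr f p F A a \<alpha>" and k: "k \<in> {1..p}"
    and s: "s \<in> subdiff f x" and xk: "x \<in> F k" and yk: "y \<in> F k"
    and t0: "t0 > 0" and zk: "x - t0 *\<^sub>R (y - x) \<in> F k"
  shows "bregman f s x y = 1/2 * inner (y - x) (A k *v (y - x))"
proof -
  define d where "d = y - x"
  have cvx: "convex (F k)" using plq k by (auto simp: plq_repr_def intro: polyhedron_imp_convex)
  have mem: "x + t *\<^sub>R d \<in> F k" if "-t0 \<le> t" "t \<le> 1" for t
  proof (cases "t \<ge> 0")
    case True
    have "(1-t) *\<^sub>R x + t *\<^sub>R y \<in> F k" using convexD[OF cvx xk yk, of "1-t" t] True that by auto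
    moreover have "(1-t) *\<^sub>R x + t *\<^sub>R y = x + t *\<^sub>R d" by (simp add: d_def algebra_simps)
    ultimately show ?thesis by simp
  next
    case False
    define u where "u = -t/t0"
    have u: "u \<ge> 0" "u \<le> 1" using False that t0 by (auto simp: u_def field_simps)
    have "(1-u) *\<^sub>R x + u *\<^sub>R (x - t0 *\<^sub>R (y - x)) \<in> F k" using convexD[OF cvx xk zk, of "1-u" u] u by auto
    moreover have "u * t0 = -t" using t0 by (simp add: u_def)
    hence "(1-u) *\<^sub>R x + u *\<^sub>R (x - t0 *\<^sub>R (y - x)) = x + t *\<^sub>R d"
    proof -
      have "(1-u) *\<^sub>R x + u *\<^sub>R (x - t0 *\<^sub>R (y - x)) = x - (u * t0) *\<^sub>R d"
        by (simp add: d_def algebra_simps)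
      thus ?thesis using \<open>u * t0 = -t\<close> by simp
    qed
    ultimately show ?thesis by simp
  qed
  have fq: "\<And>z. z \<in> F k \<Longrightarrow> f z = 1/2 * inner z (A k *v z) + inner (a k) z + \<alpha> k"
    using plq k by (auto simp: plq_repr_def)
  have symA: "transpose (A k) = A k" and psd: "inner d (A k *v d) \<ge> 0" using plq k by (auto simp: plq_repr_def)
  define b0 where "b0 = inner x (A k *v d) + inner (a k) d"
  define c where "c = 1/2 * inner d (A k *v d)"
  have c0: "c \<ge> 0" using psd by (simp add: c_def)
  have fexp: "f (x + t *\<^sub>R d) = f x + t * b0 + t^2 * c" if "-t0 \<le> t" "t \<le> 1" for t
    using fq[OF mem[OF that]] fq[OF xk] quad_expand[OF symA, of x t d "a k" "\<alpha> k"]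
    by (simp add: b0_def c_def)
  have sub: "f (x + t *\<^sub>R d) \<ge> f x + t * inner s d" for t
    using s unfolding subdiff_def by (auto dest: spec[where x="x + t *\<^sub>R d"])
  have "t * (b0 - inner s d) + t^2 * c \<ge> 0" if "-t0 \<le> t" "t \<le> 1" for t
    using fexp[OF that] sub[of t] by (simp add: algebra_simps)
  hence "b0 - inner s d = 0" using quad_zero[OF t0 c0] by blast
  moreover have "f y = f x + b0 + c" using fexp[of 1] t0 by (simp add: d_def)
  ultimately show ?thesis by (simp add: bregman_def c_def d_def)
qed

lemma nbhd:
  fixes F :: "nat \<Rightarrow> (real^'n) set"
  assumes plq: "plq_repr f p F A a \<alpha>"
  shows "\<exists>e>0. \<forall>z. dist z x < e \<longrightarrow> (\<exists>k\<in>active_idx p F x. z \<in> F k)"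
proof -
  define U where "U = - (\<Union>i\<in>{1..p} - active_idx p F x. F i)"
  have cl: "\<And>i. i \<in> {1..p} \<Longrightarrow> closed (F i)" using plq by (auto simp: plq_repr_def intro: polyhedron_imp_closed)
  have "open U" unfolding U_def using cl by (intro open_Compl closed_UN) auto
  moreover have "x \<in> U" by (auto simp: U_def active_idx_def)
  ultimately obtain e where e: "e > 0" "ball x e \<subseteq> U" by (meson openE)
  have cov: "(\<Union>i\<in>{1..p}. F i) = UNIV" using plq by (simp add: plq_repr_def)
  have "\<exists>k\<in>active_idx p F x. z \<in> F k" if "dist z x < e" for z
  proof -
    have "z \<in> U" using e that by (auto simp: dist_commute)
    moreover obtain i where "i \<in> {1..p}" "z \<in> F i" using cov by blast
    ultimately show ?thesis unfolding U_def by blast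
  qed
  thus ?thesis using e by blast
qed

lemma perJ:
  fixes f :: "real^'n \<Rightarrow> real" and C :: "(real^'n) set"
  assumes cvxf: "convex_on UNIV f" and plq: "plq_repr f p F A a \<alpha>"
    and Cne: "C \<noteq> {}" and Ccl: "closed C"
    and blr: "\<forall>x. F_at p F x \<inter> C \<noteq> {} \<longrightarrow> boundedly_linearly_regular [F_at p F x, C]"
    and R: "R > 0" and J: "J \<subseteq> {1..p}"
  shows "\<exists>L>0. \<forall>x\<in>cball 0 R. active_idx p F x = J \<longrightarrow>
           (\<forall>s\<in>subdiff f x. \<exists>y\<in>C. bregman f s x y \<le> L * (infdist x C)\<^sup>2)"
proof -
  define G where "G = (\<Inter>i\<in>J. F i)"
  have GF: "active_idx p F x = J \<Longrightarrow> F_at p F x = G" for x by (simp add: F_at_def G_def)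
  have xG: "active_idx p F x = J \<Longrightarrow> x \<in> G" for x by (auto simp: G_def active_idx_def)
  have cl: "\<And>i. i \<in> {1..p} \<Longrightarrow> closed (F i)" using plq by (auto simp: plq_repr_def intro: polyhedron_imp_closed)
  have Gcl: "closed G" unfolding G_def using cl J by (intro closed_INT) auto
  consider (A) "G \<inter> C \<noteq> {}" "boundedly_linearly_regular [G, C]"
    | (N) "G \<inter> C \<noteq> {}" "\<not> boundedly_linearly_regular [G, C]" | (E) "G \<inter> C = {}" by blast
  then show ?thesis
  proof cases
    case N
    have "active_idx p F x \<noteq> J" for x using blr[rule_format, of x] GF[of x] N by auto
    thus ?thesis by (intro exI[of _ 1]) auto
  next
    case A
    from A(2) obtain \<gamma> where g: "\<gamma> > 0"
      "\<forall>x\<in>cball 0 R. (infdist x (\<Inter>(set [G, C])))\<^sup>2 \<le> \<gamma> * (\<Sum>C\<leftarrow>[G, C]. (infdist x C)\<^sup>2)"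
      using R unfolding boundedly_linearly_regular_def by blast
    define B where "B = 1 + (\<Sum>i\<in>{1..p}. onorm (\<lambda>v. A i *v v))"
    have bl: "bounded_linear (\<lambda>v. A i *v (v::real^'n))" for i
      using matrix_vector_mul_linear linear_conv_bounded_linear by blast
    have onB: "onorm (\<lambda>v. A i *v v) \<le> B" if "i \<in> {1..p}" for i
    proof -
      have "onorm (\<lambda>v. A i *v v) \<le> (\<Sum>i\<in>{1..p}. onorm (\<lambda>v. A i *v v))"
        using that by (intro member_le_sum onorm_pos_le bl) auto
      thus ?thesis by (simp add: B_def)
    qed
    have B1: "B \<ge> 1" unfolding B_def by (smt (verit) sum_nonneg onorm_pos_le bl)
    show ?thesis
    proof (intro exI[of _ "\<gamma> * B / 2"] conjI ballI impI)
      show "\<gamma> * B / 2 > 0" using g B1 by simp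
      fix x s assume x: "x \<in> cball 0 R" and aJ: "active_idx p F x = J" and s: "s \<in> subdiff f x"
      have xG': "x \<in> G" using xG[OF aJ] .
      obtain y where y: "y \<in> G \<inter> C" "infdist x (G \<inter> C) = dist x y"
        using infdist_attains_inf[of "G \<inter> C" x] A(1) Gcl Ccl by blast
      have hg: "(dist x y)\<^sup>2 \<le> \<gamma> * (infdist x C)\<^sup>2"
        using g(2)[rule_format, OF x] y(2) infdist_zero[OF xG'] by simp
      obtain e where e: "e > 0" "\<forall>z. dist z x < e \<longrightarrow> (\<exists>k\<in>active_idx p F x. z \<in> F k)"
        using nbhd[OF plq] by blast
      define d where "d = y - x"
      define t0 where "t0 = e / (2 * (norm d + 1))"
      have t0: "t0 > 0" using e(1) unfolding t0_def by (intro divide_pos_pos) (auto intro: add_nonneg_pos)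
      have "t0 * norm d < e"
      proof -
        have "t0 * norm d \<le> t0 * (norm d + 1)" using t0 by simp
        also have "\<dots> = e / 2"
        proof -
          have "norm d + 1 > 0" by (simp add: add_nonneg_pos)
          hence "2 * norm d + 2 \<noteq> 0" by linarith
          thus ?thesis by (simp add: t0_def field_simps)
        qed
        finally show ?thesis using e by simp
      qed
      hence "dist (x - t0 *\<^sub>R d) x < e" by (simp add: dist_norm t0 less_imp_le)
      hence "\<exists>k\<in>J. x - t0 *\<^sub>R d \<in> F k" using e(2) aJ by blast
      then obtain k where k: "k \<in> J" "x - t0 *\<^sub>R (y - x) \<in> F k" by (auto simp: d_def)
      have kp: "k \<in> {1..p}" using k J by auto
      have xk: "x \<in> F k" using k aJ by (auto simp: active_idx_def)
      have yk: "y \<in> F k" using y k by (auto simp: G_def)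
      have "bregman f s x y = 1/2 * inner d (A k *v d)"
        using key[OF plq kp s xk yk t0 k(2)] by (simp add: d_def)
      also have "\<dots> \<le> 1/2 * (norm d * norm (A k *v d))"
        using norm_cauchy_schwarz[of d "A k *v d"] by simp
      also have "\<dots> \<le> 1/2 * (norm d * (B * norm d))"
      proof -
        have "norm (A k *v d) \<le> onorm (\<lambda>v. A k *v v) * norm d" using onorm[OF bl] by blast
        also have "\<dots> \<le> B * norm d" using onB[OF kp] by (simp add: mult_right_mono)
        finally show ?thesis by (simp add: mult_left_mono)
      qed
      also have "\<dots> = B / 2 * (dist x y)\<^sup>2" by (simp add: d_def dist_norm power2_eq_square norm_minus_commute)
      also have "\<dots> \<le> B / 2 * (\<gamma> * (infdist x C)\<^sup>2)" using hg B1 by (simp add: mult_left_mono)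
      finally show "\<exists>y\<in>C. bregman f s x y \<le> \<gamma> * B / 2 * (infdist x C)\<^sup>2"
        using y(1) by (intro bexI[of _ y]) (auto simp: algebra_simps)
    qed
  next
    case E
    define K where "K = G \<inter> cball 0 R"
    show ?thesis
    proof (cases "K = {}")
      case True
      have "active_idx p F x \<noteq> J" if "x \<in> cball 0 R" for x
      proof
        assume "active_idx p F x = J"
        hence "x \<in> K" using xG that by (simp add: K_def)
        thus False using True by simp
      qed
      thus ?thesis by (intro exI[of _ 1]) auto
    next
      case False
      have "compact K" unfolding K_def using Gcl by (intro closed_Int_compact) auto
      moreover have "continuous_on K (\<lambda>x. infdist x C)" by (intro continuous_on_infdist continuous_on_id)
      ultimately obtain x1 where x1: "x1 \<in> K" "\<forall>x\<in>K. infdist x1 C \<le> infdist x C"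
        using continuous_attains_inf[OF _ False] by blast
      define \<delta> where "\<delta> = infdist x1 C"
      have d0: "\<delta> > 0" unfolding \<delta>_def using x1(1) E Ccl Cne by (intro infdist_pos_not_in_closed) (auto simp: K_def)
      obtain c0 where c0: "c0 \<in> C" using Cne by blast
      define R' where "R' = 2 * R + norm c0"
      have "continuous_on UNIV f" using cvxf by (intro convex_on_continuous) auto
      hence "compact (f ` cball 0 R')" by (intro compact_continuous_image) (auto intro: continuous_on_subset)
      then obtain M where M: "M > 0" "\<forall>z\<in>f ` cball 0 R'. norm z \<le> M"
        using compact_imp_bounded bounded_pos by metis
      have fM: "\<bar>f z\<bar> \<le> M" if "norm z \<le> R'" for z using M(2) that by auto
      show ?thesis
      proof (intro exI[of _ "4 * M / \<delta>^2 + 1"] conjI ballI impI)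
        show "4 * M / \<delta>^2 + 1 > 0" using M d0 by (simp add: add_pos_nonneg)
        fix x s assume x: "x \<in> cball 0 R" and aJ: "active_idx p F x = J" and s: "s \<in> subdiff f x"
        have xK: "x \<in> K" using xG[OF aJ] x by (simp add: K_def)
        obtain y where y: "y \<in> C" "infdist x C = dist x y"
          using infdist_attains_inf[of C x] Cne Ccl by blast
        have nx: "norm x \<le> R" using x by simp
        have "dist x y \<le> dist x c0" using y infdist_le[OF c0, of x] by simp
        also have "\<dots> \<le> norm x + norm c0" by (simp add: dist_norm norm_triangle_ineq4)
        finally have dxy: "dist x y \<le> R + norm c0" using nx by simp
        have ny: "norm y \<le> R'"
        proof -
          have "norm y \<le> norm x + dist x y" by (metis dist_commute dist_norm norm_triangle_sub add.commute)
          thus ?thesis using nx dxy R by (simp add: R'_def)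
        qed
        have nz: "norm (2 *\<^sub>R x - y) \<le> R'"
        proof -
          have eq: "2 *\<^sub>R x - y = x + (x - y)" by (simp add: scaleR_2)
          have "norm (2 *\<^sub>R x - y) \<le> norm x + norm (x - y)" unfolding eq by (rule norm_triangle_ineq)
          hence "norm (2 *\<^sub>R x - y) \<le> norm x + dist x y" by (simp only: dist_norm)
          thus ?thesis using nx dxy R by (simp add: R'_def)
        qed
        have nx': "norm x \<le> R'" using nx R norm_ge_zero[of c0] unfolding R'_def by linarith
        have sub: "f (2 *\<^sub>R x - y) \<ge> f x + inner s ((2 *\<^sub>R x - y) - x)"
          using s unfolding subdiff_def by blast
        have "inner s ((2 *\<^sub>R x - y) - x) = - inner s (y - x)"
          by (simp only: scaleR_2 inner_diff_right inner_add_right)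
        hence "bregman f s x y \<le> f y + f (2 *\<^sub>R x - y) - 2 * f x" using sub unfolding bregman_def by linarith
        also have "\<dots> \<le> 4 * M" using fM[OF ny] fM[OF nz] fM[OF nx'] by linarith
        also have "\<dots> = 4 * M / \<delta>^2 * \<delta>^2" using d0 by simp
        also have "\<dots> \<le> 4 * M / \<delta>^2 * (infdist x C)^2"
        proof -
          have "\<delta> \<le> infdist x C" using x1(2) xK by (simp add: \<delta>_def)
          hence "\<delta>^2 \<le> (infdist x C)^2" using d0 by (simp add: power_mono)
          moreover have "4 * M / \<delta>^2 \<ge> 0" using M d0 by simp
          ultimately show ?thesis by (rule mult_left_mono)
        qed
        also have "\<dots> \<le> (4 * M / \<delta>^2 + 1) * (infdist x C)^2" by (simp add: algebra_simps)
        finally show "\<exists>y\<in>C. bregman f s x y \<le> (4 * M / \<delta>^2 + 1) * (infdist x C)\<^sup>2"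
          using y(1) by blast
      qed
    qed
  qed
qed

theorem theorem3p5:
  fixes f :: "real^'n \<Rightarrow> real" and p :: nat
    and F :: "nat \<Rightarrow> (real^'n) set" and A :: "nat \<Rightarrow> real^'n^'n"
    and a :: "nat \<Rightarrow> real^'n" and \<alpha> :: "nat \<Rightarrow> real"
    and C :: "(real^'n) set"
  assumes "convex_on UNIV f"
    and "strongly_convex f"
    and "plq_repr f p F A a \<alpha>"
    and "C \<noteq> {}" and "closed C" and "convex C"
    and "\<forall>x. F_at p F x \<inter> C \<noteq> {} \<longrightarrow> boundedly_linearly_regular [F_at p F x, C]"
  shows "\<forall>R>0. \<exists>L>0. \<forall>x\<in>cball 0 R. \<forall>s\<in>subdiff f x.
           bregman_dist2 f s x C \<le> L * (infdist x C)\<^sup>2"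
proof (intro allI impI)
  fix R :: real assume R: "R > 0"
  have ex: "\<forall>J\<in>Pow {1..p}. \<exists>L>0. \<forall>x\<in>cball 0 R. active_idx p F x = J \<longrightarrow>
           (\<forall>s\<in>subdiff f x. \<exists>y\<in>C. bregman f s x y \<le> L * (infdist x C)\<^sup>2)"
  proof
    fix J assume "J \<in> Pow {1..p}"
    thus "\<exists>L>0. \<forall>x\<in>cball 0 R. active_idx p F x = J \<longrightarrow>
           (\<forall>s\<in>subdiff f x. \<exists>y\<in>C. bregman f s x y \<le> L * (infdist x C)\<^sup>2)"
      by (intro perJ[OF assms(1,3,4,5,7) R]) auto
  qed
  obtain Lf where Lf: "\<forall>J\<in>Pow {1..p}. Lf J > 0 \<and> (\<forall>x\<in>cball 0 R. active_idx p F x = J \<longrightarrow>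
           (\<forall>s\<in>subdiff f x. \<exists>y\<in>C. bregman f s x y \<le> Lf J * (infdist x C)\<^sup>2))"
    using bchoice[OF ex] by (elim exE) (erule that)
  have Lpos: "Lf J > 0" if "J \<in> Pow {1..p}" for J using Lf that by blast
  have Lprop: "\<forall>x\<in>cball 0 R. active_idx p F x = J \<longrightarrow>
           (\<forall>s\<in>subdiff f x. \<exists>y\<in>C. bregman f s x y \<le> Lf J * (infdist x C)\<^sup>2)"
    if "J \<in> Pow {1..p}" for J using Lf that by blast
  define L where "L = 1 + (\<Sum>J\<in>Pow {1..p}. Lf J)"
  have LJ: "Lf J \<le> L" if "J \<in> Pow {1..p}" for J
  proof -
    have "Lf J \<le> (\<Sum>J\<in>Pow {1..p}. Lf J)"
    proof (rule member_le_sum)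
      show "J \<in> Pow {1..p}" by (rule that)
      show "finite (Pow {1..p::nat})" by simp
      fix K assume "K \<in> Pow {1..p} - {J}"
      thus "0 \<le> Lf K" using Lpos[of K] by simp
    qed
    thus ?thesis by (simp add: L_def)
  qed
  have L0: "L > 0" using LJ[of "{}"] Lpos[of "{}"] by simp
  show "\<exists>L>0. \<forall>x\<in>cball 0 R. \<forall>s\<in>subdiff f x. bregman_dist2 f s x C \<le> L * (infdist x C)\<^sup>2"
  proof (intro exI[of _ L] conjI ballI)
    show "L > 0" by (rule L0)
    fix x s assume x: "x \<in> cball 0 R" and s: "s \<in> subdiff f x"
    define J where "J = active_idx p F x"
    have JP: "J \<in> Pow {1..p}" by (auto simp: J_def active_idx_def)
    obtain y where y: "y \<in> C" "bregman f s x y \<le> Lf J * (infdist x C)\<^sup>2"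
      using Lprop[OF JP] x s unfolding J_def by blast
    have nn: "bregman f s x z \<ge> 0" for z
    proof -
      have "f z \<ge> f x + inner s (z - x)" using s unfolding subdiff_def by blast
      thus ?thesis unfolding bregman_def by linarith
    qed
    have "bregman_dist2 f s x C \<le> bregman f s x y"
      unfolding bregman_dist2_def using y(1) nn by (intro cINF_lower) (auto intro!: bdd_belowI[where m=0])
    also have "\<dots> \<le> Lf J * (infdist x C)\<^sup>2" by (rule y(2))
    also have "\<dots> \<le> L * (infdist x C)\<^sup>2" using LJ[OF JP] by (simp add: mult_right_mono)
    finally show "bregman_dist2 f s x C \<le> L * (infdist x C)\<^sup>2" .
  qed
qed

end
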